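(* Let $\mathfrak{S}=(\mathcal{X},\mathsf{S},\gamma,(\Lambda_{a})_{a\in\mathcal{A}})$ be a spectral decomposition system for the Euclidean space $\mathfrak{H}$ and let $\mathcal{D}\subset\mathfrak{H}$. Then the following are equivalent: (i) for all $X,Y\in\mathfrak{H}$, if $\gamma(X)=\gamma(Y)$ and $X\in\mathcal{D}$, then $Y\in\mathcal{D}$; (ii) there exists an $\mathsf{S}$-invariant subset $D$ of $\mathcal{X}$ such that $\mathcal{D}=\gamma^{-1}(D)$. Moreover, if (ii) holds, then $D=\Lambda_a^{-1}(\mathcal{D})$ for every $a\in\mathcal{A}$.
   Context: A Euclidean space is a finite-dimensional real inner product space; inner products are written $\langle\cdot,\cdot\rangle$ and norms $\|\cdot\|$. Let $\mathfrak{H}$ and $\mathcal{X}$ be Euclidean spaces, let $\mathsf{S}$ be a group acting on $\mathcal{X}$ by linear isometries, let $\gamma\colon\mathfrak{H}\to\mathcal{X}$, and let $(\Lambda_a)_{a\in\mathcal{A}}$ be a family of linear operators from $\mathcal{X}$ to $\mathfrak{H}$. The orbit of $x$ is $\mathsf{S}\cdot x=\{s\cdot x: s\in\mathsf{S}\}$; a map $f$ on $\mathcal{X}$ is $\mathsf{S}$-invariant if $f(s\cdot x)=f(x)$ for all $s,x$; a subset $D$ of $\mathcal{X}$ is $\mathsf{S}$-invariant if $s\cdot x\in D$ whenever $x\in D$, $s\in\mathsf{S}$. The tuple is a spectral decomposition system for $\mathfrak{H}$ if: [A] every $\Lambda_a$ is an isometry; [B] there exists an $\mathsf{S}$-invariant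 $\tau\colon\mathcal{X}\to\mathcal{X}$ with $\tau(x)\in\mathsf{S}\cdot x$ for all $x$ and $\gamma\circ\Lambda_a=\tau$ for all $a$; [C] for every $X\in\mathfrak{H}$ there is $a$ with $X=\Lambda_a\gamma(X)$; [D] $\langle X,Y\rangle\leq\langle\gamma(X),\gamma(Y)\rangle$ for all $X,Y\in\mathfrak{H}$. *)

theory Defs
  imports "HOL-Analysis.Analysis"
begin

definition linear_isometry :: "('a::real_normed_vector \<Rightarrow> 'b::real_normed_vector) \<Rightarrow> bool" where
  "linear_isometry f \<longleftrightarrow> linear f \<and> (\<forall>x. norm (f x) = norm x)"

definition isometry_group :: "('x::euclidean_space \<Rightarrow> 'x) set \<Rightarrow> bool" where
  "isometry_group S \<longleftrightarrow>
     id \<in> S \<and> (\<forall>s\<in>S. \<forall>t\<in>S. s \<circ> t \<in> S) \<and>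
     (\<forall>s\<in>S. bij s \<and> inv s \<in> S) \<and> (\<forall>s\<in>S. linear_isometry s)"

definition orbit :: "('x \<Rightarrow> 'x) set \<Rightarrow> 'x \<Rightarrow> 'x set" where
  "orbit S x = (\<lambda>s. s x) ` S"

definition S_invariant_map :: "('x \<Rightarrow> 'x) set \<Rightarrow> ('x \<Rightarrow> 'b) \<Rightarrow> bool" where
  "S_invariant_map S f \<longleftrightarrow> (\<forall>s\<in>S. \<forall>x. f (s x) = f x)"

definition S_invariant_set :: "('x \<Rightarrow> 'x) set \<Rightarrow> 'x set \<Rightarrow> bool" where
  "S_invariant_set S D \<longleftrightarrow> (\<forall>s\<in>S. \<forall>x\<in>D. s x \<in> D)"

definition spectral_decomposition_system ::
  "('x::euclidean_space \<Rightarrow> 'x) set \<Rightarrow> ('h::euclidean_space \<Rightarrow> 'x) \<Rightarrow> ('a \<Rightarrow> 'x \<Rightarrow> 'h) \<Rightarrow> bool" where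
  "spectral_decomposition_system S \<gamma> \<Lambda> \<longleftrightarrow>
     isometry_group S \<and>
     (\<forall>a. linear_isometry (\<Lambda> a)) \<and>
     (\<exists>\<tau>. S_invariant_map S \<tau> \<and> (\<forall>x. \<tau> x \<in> orbit S x) \<and> (\<forall>a. \<gamma> \<circ> \<Lambda> a = \<tau>)) \<and>
     (\<forall>X. \<exists>a. X = \<Lambda> a (\<gamma> X)) \<and>
     (\<forall>X Y. inner X Y \<le> inner (\<gamma> X) (\<gamma> Y))"

end

theory Submission
  imports Defs
begin

theorem corollary4p3:
  fixes S :: "('x::euclidean_space \<Rightarrow> 'x) set"
    and \<gamma> :: "'h::euclidean_space \<Rightarrow> 'x"
    and \<Lambda> :: "'a \<Rightarrow> 'x \<Rightarrow> 'h"
    and \<D> :: "'h set"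
  assumes "spectral_decomposition_system S \<gamma> \<Lambda>"
  shows "((\<forall>X Y. \<gamma> X = \<gamma> Y \<and> X \<in> \<D> \<longrightarrow> Y \<in> \<D>) \<longleftrightarrow>
          (\<exists>D. S_invariant_set S D \<and> \<D> = \<gamma> -` D))
         \<and> (\<forall>D. S_invariant_set S D \<and> \<D> = \<gamma> -` D \<longrightarrow> (\<forall>a. D = \<Lambda> a -` \<D>))"
proof -
  have grp: "isometry_group S" and C: "\<And>X. \<exists>a. X = \<Lambda> a (\<gamma> X)"
    using assms unfolding spectral_decomposition_system_def by auto
  obtain \<tau> where tinv0: "S_invariant_map S \<tau>"
    and torb: "\<And>x. \<tau> x \<in> orbit S x" and tB0: "\<And>a. \<gamma> \<circ> \<Lambda> a = \<tau>"
    using assms unfolding spectral_decomposition_system_def by blast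
  have tinv: "\<And>s x. s \<in> S \<Longrightarrow> \<tau> (s x) = \<tau> x" using tinv0 unfolding S_invariant_map_def by blast
  have tB: "\<And>a x. \<gamma> (\<Lambda> a x) = \<tau> x" using fun_cong[OF tB0] by simp
  have bij: "\<And>s. s \<in> S \<Longrightarrow> bij s \<and> inv s \<in> S" using grp unfolding isometry_group_def by auto
  have gt: "\<tau> (\<gamma> X) = \<gamma> X" for X
  proof -
    obtain a where "X = \<Lambda> a (\<gamma> X)" using C by blast
    hence "\<gamma> X = \<gamma> (\<Lambda> a (\<gamma> X))" by simp
    thus ?thesis using tB by simp
  qed
  have part2: "\<forall>D. S_invariant_set S D \<and> \<D> = \<gamma> -` D \<longrightarrow> (\<forall>a. D = \<Lambda> a -` \<D>)"
  proof (intro allI impI)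
    fix D a assume h: "S_invariant_set S D \<and> \<D> = \<gamma> -` D"
    have inv: "\<And>s x. s \<in> S \<Longrightarrow> x \<in> D \<Longrightarrow> s x \<in> D" using h unfolding S_invariant_set_def by blast
    have eq: "\<And>x. (\<Lambda> a x \<in> \<D>) = (\<tau> x \<in> D)"
    proof -
      fix x
      have "(\<Lambda> a x \<in> \<D>) = (\<gamma> (\<Lambda> a x) \<in> D)" using h by blast
      also have "\<dots> = (\<tau> x \<in> D)" by (simp only: tB)
      finally show "(\<Lambda> a x \<in> \<D>) = (\<tau> x \<in> D)" .
    qed
    show "D = \<Lambda> a -` \<D>"
    proof (intro set_eqI iffI)
      fix x assume x: "x \<in> D"
      obtain s where s: "s \<in> S" "\<tau> x = s x" using torb[of x] unfolding orbit_def by blast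
      have "\<tau> x \<in> D" using inv[OF s(1) x] s(2) by simp
      then show "x \<in> \<Lambda> a -` \<D>" using eq by blast
    next
      fix x assume x: "x \<in> \<Lambda> a -` \<D>"
      obtain s where s: "s \<in> S" "\<tau> x = s x" using torb[of x] unfolding orbit_def by blast
      have "\<tau> x \<in> D" using x eq by blast
      hence "s x \<in> D" using s(2) by simp
      moreover have "inv s \<in> S" "bij s" using bij[OF s(1)] by blast+
      ultimately have "inv s (s x) \<in> D" using inv by blast
      thus "x \<in> D" using \<open>bij s\<close> by (simp add: bij_is_inj)
    qed
  qed
  have part1: "(\<forall>X Y. \<gamma> X = \<gamma> Y \<and> X \<in> \<D> \<longrightarrow> Y \<in> \<D>) \<Longrightarrow>
          (\<exists>D. S_invariant_set S D \<and> \<D> = \<gamma> -` D)"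
  proof -
    assume i: "\<forall>X Y. \<gamma> X = \<gamma> Y \<and> X \<in> \<D> \<longrightarrow> Y \<in> \<D>"
    fix a0 :: 'a
    let ?D = "{x. \<Lambda> a0 x \<in> \<D>}"
    have "S_invariant_set S ?D" unfolding S_invariant_set_def
    proof (intro ballI)
      fix s x assume "s \<in> S" "x \<in> ?D"
      have "\<gamma> (\<Lambda> a0 x) = \<gamma> (\<Lambda> a0 (s x))" using tB tinv \<open>s \<in> S\<close> by simp
      then show "s x \<in> ?D" using i \<open>x \<in> ?D\<close> by blast
    qed
    moreover have "\<D> = \<gamma> -` ?D"
    proof (intro set_eqI iffI)
      fix X assume "X \<in> \<D>"
      have "\<gamma> (\<Lambda> a0 (\<gamma> X)) = \<gamma> X" using tB gt by simp
      then show "X \<in> \<gamma> -` ?D" using i \<open>X \<in> \<D>\<close> by auto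
    next
      fix X assume "X \<in> \<gamma> -` ?D"
      have "\<gamma> (\<Lambda> a0 (\<gamma> X)) = \<gamma> X" using tB gt by simp
      then show "X \<in> \<D>" using i \<open>X \<in> \<gamma> -` ?D\<close> by auto
    qed
    ultimately show ?thesis by blast
  qed
  have part3: "(\<exists>D. S_invariant_set S D \<and> \<D> = \<gamma> -` D) \<Longrightarrow>
      (\<forall>X Y. \<gamma> X = \<gamma> Y \<and> X \<in> \<D> \<longrightarrow> Y \<in> \<D>)"
  proof (intro allI impI)
    fix X Y assume "\<exists>D. S_invariant_set S D \<and> \<D> = \<gamma> -` D" and xy: "\<gamma> X = \<gamma> Y \<and> X \<in> \<D>"
    then obtain D where "\<D> = \<gamma> -` D" by blast
    then show "Y \<in> \<D>" using xy by auto
  qed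
  show ?thesis using part1 part2 part3 by (intro conjI iffI) auto
qed

end
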